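(* Let $0<\delta<1$, let $X\subset\mathbb{R}^d$ be finite and $\delta$-separated, and let $K\ge1$. Then $X$ can be partitioned as $X=Y\sqcup Z$, with $Z=Z_1\sqcup\cdots\sqcup Z_N$, such that: (i) $\displaystyle\sup_{r\ge\delta,\ x\in\mathbb{R}^d}\frac{\#(B(x,r)\cap Y)}{r/\delta}\le K$; (ii) each $Z_i$ is contained in a ball of radius $r_i\gtrsim\delta K^{1/d}$, and each $Z_i$ has a subset $Z_i'$ with $\#Z_i'\sim r_i/\delta$ and $$\sup_{r\ge\delta,\ x\in\mathbb{R}^d}\frac{\#(B(x,r)\cap Z_i')}{r/\delta}\lessapprox 1.$$
   Context: $A\lesssim B$ means $A\le CB$ for a constant $C$ (allowed to depend on the dimension $d$); $A\sim B$ means $A\lesssim B$ and $B\lesssim A$; $A\lessapprox B$ means $A\lesssim|\log\delta|^{C'}B$ for an absolute constant $C'$. *)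

theory Defs
  imports Complex_Main
begin

text \<open>Points of R^d are represented as functions nat => real vanishing at all
  coordinates i >= d (explicit carrier, so that the dimension d can be quantified
  inside the statement).\<close>

definition Rd :: "nat \<Rightarrow> (nat \<Rightarrow> real) set" where
  "Rd d = {x. \<forall>i\<ge>d. x i = 0}"

definition edist :: "nat \<Rightarrow> (nat \<Rightarrow> real) \<Rightarrow> (nat \<Rightarrow> real) \<Rightarrow> real" where
  "edist d x y = sqrt (\<Sum>i<d. (x i - y i)^2)"

definition eball :: "nat \<Rightarrow> (nat \<Rightarrow> real) \<Rightarrow> real \<Rightarrow> (nat \<Rightarrow> real) set" where
  "eball d x r = {y \<in> Rd d. edist d x y < r}"

definition separated :: "nat \<Rightarrow> real \<Rightarrow> (nat \<Rightarrow> real) set \<Rightarrow> bool" where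
  "separated d \<delta> X \<longleftrightarrow> (\<forall>x\<in>X. \<forall>y\<in>X. x \<noteq> y \<longrightarrow> edist d x y \<ge> \<delta>)"

definition frostman_le :: "nat \<Rightarrow> real \<Rightarrow> (nat \<Rightarrow> real) set \<Rightarrow> real \<Rightarrow> bool" where
  "frostman_le d \<delta> A M \<longleftrightarrow>
     (\<forall>x\<in>Rd d. \<forall>r\<ge>\<delta>. real (card (eball d x r \<inter> A)) \<le> M * (r / \<delta>))"

end

theory Submission
  imports Defs "HOL-Library.FuncSet"
begin

lemma bin_bound: "(\<forall>k<m. f k < (2::nat)) \<Longrightarrow> (\<Sum>k<m. f k * 2^k) < 2^m"
proof (induction m)
  case 0 then show ?case by simp
next
  case (Suc m)
  then have a: "(\<Sum>k<m. f k * 2^k) < 2^m" by simp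
  have "f m \<le> 1" using Suc.prems by auto
  then have b: "f m * 2^m \<le> 2^m" by simp
  have "(\<Sum>k<Suc m. f k * 2^k) = (\<Sum>k<m. f k * 2^k) + f m * 2^m" by simp
  moreover have "(2::nat)^Suc m = 2^m + 2^m" by simp
  ultimately show ?case using a b by linarith
qed

lemma bin_unique: "(\<forall>k<m. f k < (2::nat)) \<Longrightarrow> (\<forall>k<m. g k < 2) \<Longrightarrow>
  (\<Sum>k<m. f k * 2^k) = (\<Sum>k<m. g k * 2^k) \<Longrightarrow> \<forall>k<m. f k = g k"
proof (induction m)
  case 0 then show ?case by simp
next
  case (Suc m)
  have bf: "(\<Sum>k<m. f k * 2^k) < 2^m" using Suc.prems(1) by (intro bin_bound) auto
  have bg: "(\<Sum>k<m. g k * 2^k) < 2^m" using Suc.prems(2) by (intro bin_bound) auto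
  have e: "(\<Sum>k<m. f k * 2^k) + f m * 2^m = (\<Sum>k<m. g k * 2^k) + g m * 2^m"
    using Suc.prems(3) by simp
  have "((\<Sum>k<m. f k * 2^k) + f m * 2^m) mod 2^m = (\<Sum>k<m. f k * 2^k)" using bf by simp
  moreover have "((\<Sum>k<m. g k * 2^k) + g m * 2^m) mod 2^m = (\<Sum>k<m. g k * 2^k)" using bg by simp
  ultimately have e1: "(\<Sum>k<m. f k * 2^k) = (\<Sum>k<m. g k * 2^k)" using e by metis
  have "((\<Sum>k<m. f k * 2^k) + f m * 2^m) div 2^m = f m" using bf by simp
  moreover have "((\<Sum>k<m. g k * 2^k) + g m * 2^m) div 2^m = g m" using bg by simp
  ultimately have e2: "f m = g m" using e by metis
  have "\<forall>k<m. f k = g k" using Suc.IH Suc.prems e1 by auto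
  then show ?case using e2 less_Suc_eq by auto
qed

definition dig :: "nat \<Rightarrow> (nat \<Rightarrow> nat) \<Rightarrow> nat" where
  "dig d u = (\<Sum>k<d. (u k mod 2) * 2^k)"

fun mc :: "nat \<Rightarrow> nat \<Rightarrow> (nat \<Rightarrow> nat) \<Rightarrow> nat" where
  "mc d 0 u = 0"
| "mc d (Suc n) u = dig d u + 2^d * mc d n (\<lambda>k. u k div 2)"

lemma dig_bound: "dig d u < 2^d"
  unfolding dig_def by (rule bin_bound) auto

lemma mc_div: "i \<le> n \<Longrightarrow> mc d n u div (2^d)^i = mc d (n-i) (\<lambda>k. u k div 2^i)"
proof (induction i)
  case 0 then show ?case by simp
next
  case (Suc i)
  then have IH: "mc d n u div (2^d)^i = mc d (n-i) (\<lambda>k. u k div 2^i)" by simp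
  obtain m where m: "n - i = Suc m" using Suc.prems by (metis Suc_diff_Suc Suc_le_lessD)
  have mm: "n - Suc i = m" using m by simp
  have "mc d n u div (2^d)^(Suc i) = (mc d n u div (2^d)^i) div 2^d"
    by (simp only: power_Suc2 div_mult2_eq)
  also have "\<dots> = mc d (Suc m) (\<lambda>k. u k div 2^i) div 2^d" using IH m by simp
  also have "\<dots> = mc d m (\<lambda>k. u k div 2^i div 2)"
    using dig_bound[of d "\<lambda>k. u k div 2^i"] by simp
  also have "\<dots> = mc d (n - Suc i) (\<lambda>k. u k div 2^(Suc i))"
    using mm by (simp add: div_mult2_eq power_Suc2 del: power_Suc)
  finally show ?case .
qed

lemma mc_inj: "(\<forall>k<d. u k < 2^n) \<Longrightarrow> (\<forall>k<d. w k < 2^n) \<Longrightarrow> mc d n u = mc d n w \<Longrightarrow> \<forall>k<d. u k = w k"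
proof (induction n arbitrary: u w)
  case 0 then show ?case by simp
next
  case (Suc n)
  have e: "dig d u + 2^d * mc d n (\<lambda>k. u k div 2) = dig d w + 2^d * mc d n (\<lambda>k. w k div 2)"
    using Suc.prems(3) by simp
  have e1: "dig d u = dig d w"
    using e dig_bound[of d u] dig_bound[of d w]
    by (metis mod_mult_self2 mod_less mult.commute)
  have e2: "mc d n (\<lambda>k. u k div 2) = mc d n (\<lambda>k. w k div 2)" using e e1 by simp
  have u2: "\<forall>k<d. u k div 2 < 2^n" using Suc.prems(1)
    by (metis less_mult_imp_div_less mult.commute power_Suc)
  have w2: "\<forall>k<d. w k div 2 < 2^n" using Suc.prems(2)
    by (metis less_mult_imp_div_less mult.commute power_Suc)
  have "\<forall>k<d. u k div 2 = w k div 2"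
    using Suc.IH[OF u2 w2 e2] .
  moreover have "\<forall>k<d. u k mod 2 = w k mod 2"
    using bin_unique[of d "\<lambda>k. u k mod 2" "\<lambda>k. w k mod 2"] e1 unfolding dig_def by auto
  ultimately show ?case by (metis div_mult_mod_eq)
qed

lemma thin:
  fixes code :: "'a \<Rightarrow> nat"
  assumes fin: "finite S" and inj: "inj_on code S" and M: "M \<ge> 1"
  shows "\<exists>S'\<subseteq>S. card S div M \<le> card S' \<and>
    (\<forall>a b. real (card {q\<in>S'. a \<le> code q \<and> code q < b})
       \<le> real (card {q\<in>S. a \<le> code q \<and> code q < b}) / real M + 2)"
proof -
  define rk where "rk q = card {y\<in>S. code y < code q}" for q
  define S' where "S' = {q\<in>S. rk q mod M = 0}"
  have rk_mono: "rk q < rk q'" if "q\<in>S" "q'\<in>S" "code q < code q'" for q q'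
    unfolding rk_def by (rule psubset_card_mono) (use fin that in auto)
  have rk_inj: "inj_on rk S"
  proof (rule inj_onI)
    fix q q' assume "q\<in>S" "q'\<in>S" "rk q = rk q'"
    then have "code q = code q'" using rk_mono by (metis less_irrefl linorder_neqE_nat)
    then show "q = q'" using inj \<open>q\<in>S\<close> \<open>q'\<in>S\<close> by (simp add: inj_on_def)
  qed
  have rk_lt: "rk q < card S" if "q\<in>S" for q
    unfolding rk_def by (rule psubset_card_mono) (use fin that in auto)
  have img: "rk ` S = {..<card S}"
  proof (rule card_subset_eq)
    show "rk ` S \<subseteq> {..<card S}" using rk_lt by auto
    show "card (rk ` S) = card {..<card S}" using card_image[OF rk_inj] by simp
  qed simp
  have imgS': "rk ` S' = {r\<in>{..<card S}. r mod M = 0}"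
  proof -
    have "rk ` S' = {r \<in> rk ` S. r mod M = 0}" unfolding S'_def by auto
    then show ?thesis using img by simp
  qed
  have cS': "card S' = card {r\<in>{..<card S}. r mod M = 0}"
    using card_image[OF inj_on_subset[OF rk_inj], of S'] imgS' unfolding S'_def by auto
  have "card {..<card S div M} \<le> card {r\<in>{..<card S}. r mod M = 0}"
  proof (rule card_inj_on_le[where f="\<lambda>q. q * M"])
    show "inj_on (\<lambda>q. q * M) {..<card S div M}" using M by (auto simp: inj_on_def)
    show "(\<lambda>q. q * M) ` {..<card S div M} \<subseteq> {r \<in> {..<card S}. r mod M = 0}"
    proof
      fix r assume "r \<in> (\<lambda>q. q * M) ` {..<card S div M}"
      then obtain q where q: "q < card S div M" "r = q * M" by auto
      have "(q+1) * M \<le> card S div M * M" using q(1) by (intro mult_right_mono) auto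
      also have "\<dots> \<le> card S" by simp
      finally show "r \<in> {r \<in> {..<card S}. r mod M = 0}" using q M by auto
    qed
  qed simp
  then have c1: "card S div M \<le> card S'" using cS' by simp
  have c2: "real (card {q\<in>S'. a \<le> code q \<and> code q < b})
       \<le> real (card {q\<in>S. a \<le> code q \<and> code q < b}) / real M + 2" for a b
  proof -
    define A where "A = {q\<in>S'. a \<le> code q \<and> code q < b}"
    define B where "B = {q\<in>S. a \<le> code q \<and> code q < b}"
    define ra where "ra = card {y\<in>S. code y < a}"
    define rb where "rb = card {y\<in>S. code y < b}"
    show ?thesis
    proof (cases "a < b")
      case False
      then have e: "{q\<in>S'. a \<le> code q \<and> code q < b} = {}" by auto
      have "real (card {q\<in>S'. a \<le> code q \<and> code q < b}) = 0" by (simp only: e card.empty of_nat_0)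
      moreover have "0 \<le> real (card {q\<in>S. a \<le> code q \<and> code q < b}) / real M" by simp
      ultimately show ?thesis by linarith
    next
      case True
      have un: "{y\<in>S. code y < b} = {y\<in>S. code y < a} \<union> B" unfolding B_def using True by auto
      have "rb = ra + card B" unfolding rb_def ra_def un
        by (rule card_Un_disjoint) (use fin in \<open>auto simp: B_def\<close>)
      have inA: "ra \<le> rk q \<and> rk q < rb" if "q \<in> A" for q
      proof
        have qS: "q\<in>S" "a \<le> code q" "code q < b" using that unfolding A_def S'_def by auto
        show "ra \<le> rk q" unfolding ra_def rk_def by (rule card_mono) (use fin qS in auto)
        show "rk q < rb" unfolding rb_def rk_def by (rule psubset_card_mono) (use fin qS in auto)
      qed
      have AS: "A \<subseteq> S" unfolding A_def S'_def by auto
      have "card A = card (rk ` A)" using card_image[OF inj_on_subset[OF rk_inj AS]] by simp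
      also have "\<dots> = card ((\<lambda>r. r div M) ` (rk ` A))"
      proof (rule card_image[symmetric], rule inj_onI)
        fix x y assume "x \<in> rk ` A" "y \<in> rk ` A" "x div M = y div M"
        moreover have "x mod M = 0" "y mod M = 0" using \<open>x \<in> rk ` A\<close> \<open>y \<in> rk ` A\<close>
          unfolding A_def S'_def by auto
        ultimately show "x = y" by (metis div_mult_mod_eq)
      qed
      also have "\<dots> \<le> card {ra div M .. rb div M}"
        by (rule card_mono) (use inA in \<open>force intro: div_le_mono less_imp_le\<close>)+
      also have "\<dots> = rb div M + 1 - ra div M" by simp
      finally have cA: "card A \<le> rb div M + 1 - ra div M" .
      have "real (rb div M) \<le> real rb / real M"
      proof -
        have "rb div M * M \<le> rb" by (rule div_times_less_eq_dividend)
        then have "real (rb div M) * real M \<le> real rb" by (metis of_nat_le_iff of_nat_mult)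
        then show ?thesis using M by (simp add: pos_le_divide_eq)
      qed
      moreover have "real ra < (real (ra div M) + 1) * real M"
      proof -
        have "ra mod M < M" using M by simp
        moreover have "ra div M * M + ra mod M = ra" by (rule div_mult_mod_eq)
        ultimately have "ra < ra div M * M + M" by linarith
        then have "ra < (ra div M + 1) * M" by (simp add: algebra_simps)
        then show ?thesis by (metis of_nat_1 of_nat_add of_nat_less_iff of_nat_mult)
      qed
      ultimately have "real (rb div M) + 1 - real (ra div M) \<le> (real rb - real ra)/real M + 2"
        using M by (simp add: field_simps)
      moreover have "(real rb - real ra) / real M = real (card B) / real M" using \<open>rb = ra + card B\<close> by simp
      moreover have "ra \<le> rb" using \<open>rb = ra + card B\<close> by simp
      then have "ra div M \<le> rb div M + 1" using div_le_mono[of ra rb M] by linarith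
      then have "real (card A) \<le> real (rb div M) + 1 - real (ra div M)"
        using cA by (metis of_nat_1 of_nat_add of_nat_diff of_nat_le_iff)
      ultimately show ?thesis unfolding A_def B_def by linarith
    qed
  qed
  have "S' \<subseteq> S" unfolding S'_def by auto
  then show ?thesis using c1 c2 by blast
qed


definition idx :: "nat \<Rightarrow> real \<Rightarrow> nat \<Rightarrow> (nat\<Rightarrow>real) \<Rightarrow> (nat \<Rightarrow> int)" where
  "idx d \<delta> i p = restrict (\<lambda>k. \<lfloor>p k / (2^i * (\<delta> / real d))\<rfloor>) {..<d}"

lemma idx_eq: "idx d \<delta> i p = idx d \<delta> i q \<longleftrightarrow>
   (\<forall>k<d. \<lfloor>p k / (2^i * (\<delta> / real d))\<rfloor> = \<lfloor>q k / (2^i * (\<delta> / real d))\<rfloor>)"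
  unfolding idx_def by (auto simp: fun_eq_iff restrict_def)

lemma idx_app: "k < d \<Longrightarrow> idx d \<delta> i p k = \<lfloor>p k / (2^i * (\<delta> / real d))\<rfloor>"
  unfolding idx_def by simp

lemma floor_lvl: fixes x e :: real shows "\<lfloor>x / (2^i * e)\<rfloor> = \<lfloor>x / e\<rfloor> div 2^i"
proof -
  have "x / (2^i * e) = (x / e) / real_of_int (2^i)" by simp
  then show ?thesis using floor_divide_real_eq_div[of "2^i" "x/e"] by (simp add: mult.commute)
qed

lemma sq_sum_lt:
  assumes "d \<ge> 1" "\<delta> > 0" "\<forall>k<d. \<bar>p k - q k\<bar> < \<delta> / real d"
  shows "edist d p q < \<delta>"
proof -
  have "(\<Sum>k<d. (p k - q k)^2) < (\<Sum>k<d. (\<delta> / real d)^2)"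
  proof (rule sum_strict_mono)
    have "0 \<in> {..<d}" using assms(1) by simp
    then show "{..<d} \<noteq> {}" by blast
    fix k assume "k \<in> {..<d}"
    then have "\<bar>p k - q k\<bar> < \<delta> / real d" using assms by auto
    then have "\<bar>p k - q k\<bar>^2 < (\<delta> / real d)^2"
      by (intro power_strict_mono) auto
    then show "(p k - q k)^2 < (\<delta> / real d)^2" by simp
  qed simp
  also have "\<dots> = \<delta>^2 / real d" using assms by (simp add: power2_eq_square)
  also have "\<dots> \<le> \<delta>^2" using assms by (simp add: divide_le_eq)
  finally have "(\<Sum>k<d. (p k - q k)^2) < \<delta>^2" .
  then have "sqrt (\<Sum>k<d. (p k - q k)^2) < sqrt (\<delta>^2)" by (rule real_sqrt_less_mono)
  then show ?thesis unfolding edist_def using assms by simp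
qed

lemma sep_idx0:
  assumes "separated d \<delta> W" "p \<in> W" "q \<in> W" "d \<ge> 1" "\<delta> > 0"
    "idx d \<delta> 0 p = idx d \<delta> 0 q"
  shows "p = q"
proof (rule ccontr)
  assume "p \<noteq> q"
  then have ge: "edist d p q \<ge> \<delta>" using assms unfolding separated_def by auto
  have "\<forall>k<d. \<bar>p k - q k\<bar> < \<delta> / real d"
  proof (intro allI impI)
    fix k assume "k < d"
    define e where "e = \<delta> / real d"
    have e: "e > 0" using assms unfolding e_def by auto
    have fl: "\<lfloor>p k / e\<rfloor> = \<lfloor>q k / e\<rfloor>" using assms(6) \<open>k<d\<close> unfolding idx_eq e_def by simp
    have f1: "of_int \<lfloor>p k / e\<rfloor> \<le> p k / e" "p k / e < of_int \<lfloor>p k / e\<rfloor> + 1"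
      by (rule of_int_floor_le, rule real_of_int_floor_add_one_gt)
    have f2: "of_int \<lfloor>q k / e\<rfloor> \<le> q k / e" "q k / e < of_int \<lfloor>q k / e\<rfloor> + 1"
      by (rule of_int_floor_le, rule real_of_int_floor_add_one_gt)
    have "\<bar>p k / e - q k / e\<bar> < 1" using f1 f2 fl by (simp add: abs_less_iff) linarith
    then have "\<bar>p k - q k\<bar> / e < 1" using e by (simp add: diff_divide_distrib[symmetric])
    then show "\<bar>p k - q k\<bar> < \<delta> / real d" using e unfolding e_def[symmetric] by (simp add: divide_less_eq)
  qed
  then have "edist d p q < \<delta>" using sq_sum_lt assms by blast
  then show False using ge by simp
qed

lemma card_cube_le:
  assumes "separated d \<delta> W" "d \<ge> 1" "\<delta> > 0"
  shows "card {q\<in>W. idx d \<delta> j q = v} \<le> (2^j)^d"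
proof -
  define T where "T = Pi\<^sub>E {..<d} (\<lambda>k. {2^j * v k ..< 2^j * v k + 2^j})"
  have "card {q\<in>W. idx d \<delta> j q = v} \<le> card T"
  proof (rule card_inj_on_le[where f="idx d \<delta> 0"])
    show "inj_on (idx d \<delta> 0) {q \<in> W. idx d \<delta> j q = v}"
      using sep_idx0[OF assms(1) _ _ assms(2,3)] by (auto simp: inj_on_def)
    show "finite T" unfolding T_def by (intro finite_PiE) auto
    show "idx d \<delta> 0 ` {q \<in> W. idx d \<delta> j q = v} \<subseteq> T"
    proof
      fix y assume "y \<in> idx d \<delta> 0 ` {q \<in> W. idx d \<delta> j q = v}"
      then obtain q where q: "idx d \<delta> j q = v" "y = idx d \<delta> 0 q" by auto
      have "\<lfloor>q k / (\<delta> / real d)\<rfloor> \<in> {2^j * v k ..< 2^j * v k + 2^j}" if "k<d" for k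
      proof -
        have "v k = \<lfloor>q k / (2^j * (\<delta> / real d))\<rfloor>" using q(1) idx_app[OF that] by metis
        then have vk: "v k = \<lfloor>q k / (\<delta> / real d)\<rfloor> div 2^j" by (simp add: floor_lvl)
        define z where "z = \<lfloor>q k / (\<delta> / real d)\<rfloor>"
        have h1: "z = 2^j * (z div 2^j) + z mod 2^j" by (rule div_mult_mod_eq[symmetric, of z "2^j", simplified mult.commute])
        have h2: "0 \<le> z mod 2^j" "z mod 2^j < 2^j" by simp_all
        show ?thesis unfolding vk z_def[symmetric] atLeastLessThan_iff using h1 h2 by linarith
      qed
      then show "y \<in> T" unfolding T_def q(2) idx_def by (auto simp: restrict_PiE_iff)
    qed
  qed
  also have "card T = (2^j)^d" unfolding T_def by (simp add: card_PiE nat_power_eq)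
  finally show ?thesis .
qed

lemma coord_lt:
  assumes "edist d x q < s" "k < d"
  shows "\<bar>x k - q k\<bar> < s"
proof -
  have nn: "0 \<le> (\<Sum>k<d. (x k - q k)^2)" by (intro sum_nonneg) simp
  have s0: "s > 0" using assms(1) real_sqrt_ge_zero[OF nn] unfolding edist_def by linarith
  have "(x k - q k)^2 \<le> (\<Sum>k<d. (x k - q k)^2)"
    by (rule member_le_sum[where f="\<lambda>k. (x k - q k)^2"]) (use assms(2) in simp_all)
  also have "\<dots> = (edist d x q)^2" unfolding edist_def using nn by (rule real_sqrt_pow2[symmetric])
  also have "\<dots> < s^2" using assms(1) nn unfolding edist_def
    by (intro power_strict_mono) simp_all
  finally have h: "(x k - q k)^2 < s^2" .
  have "\<bar>x k - q k\<bar>^2 < s^2" using h by (simp only: power2_abs)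
  then show ?thesis using power_less_imp_less_base[of "\<bar>x k - q k\<bar>" 2 s] s0 by simp
qed

lemma cube_ball:
  assumes d: "d \<ge> 1" and dl: "\<delta> > 0" and fin: "finite A" and B: "B \<ge> 0"
    and cub: "\<forall>i v. real (card {q\<in>A. idx d \<delta> i q = v}) \<le> B * 2^i"
    and s: "s \<ge> \<delta>"
  shows "real (card (eball d x s \<inter> A)) \<le> B * 2^(d+2) * real d * (s / \<delta>)"
proof -
  define e where "e = \<delta> / real d"
  have e: "e > 0" "e \<le> \<delta>" using d dl unfolding e_def by (auto simp: divide_le_eq)
  have "\<exists>i. 2 * s / e < 2^i" by (rule real_arch_pow) simp
  then obtain i0 where "2 * s / e < 2^i0" by blast
  then have "2 * s < 2^i0 * e" using e by (simp add: pos_divide_less_eq)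
  then have ex: "\<exists>i. 2 * s \<le> 2^i * e" by (intro exI[of _ i0]) simp
  define i where "i = (LEAST i. 2 * s \<le> 2^i * e)"
  have i1: "2 * s \<le> 2^i * e" unfolding i_def by (rule LeastI_ex[OF ex])
  have "i \<noteq> 0"
  proof
    assume "i = 0" then have "2 * s \<le> e" using i1 by simp
    then show False using e s dl by linarith
  qed
  then obtain i' where i': "i = Suc i'" by (cases i) auto
  have "\<not> 2 * s \<le> 2^i' * e" using not_less_Least[of i' "\<lambda>i. 2 * s \<le> 2^i * e"] i' unfolding i_def by simp
  then have "2^i' * e < 2 * s" by simp
  then have i2: "2^i * e < 4 * s" using i' by (simp add: mult.commute)
  define l where "l = 2^i * e"
  have l: "l > 0" "2 * s \<le> l" "l < 4 * s" using i1 i2 e unfolding l_def by auto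
  define a where "a k = \<lfloor>(x k - s) / l\<rfloor>" for k
  define V where "V = Pi\<^sub>E {..<d} (\<lambda>k. {a k, a k + 1})"
  have finV: "finite V" unfolding V_def by (intro finite_PiE) auto
  have cardV: "card V = 2^d" unfolding V_def by (simp add: card_PiE numeral_2_eq_2)
  have sub: "eball d x s \<inter> A \<subseteq> (\<Union>v\<in>V. {q\<in>A. idx d \<delta> i q = v})"
  proof
    fix q assume q: "q \<in> eball d x s \<inter> A"
    have "\<lfloor>q k / l\<rfloor> \<in> {a k, a k + 1}" if k: "k < d" for k
    proof -
      have "\<bar>x k - q k\<bar> < s" using q k coord_lt unfolding eball_def by blast
      then have c1: "x k - s < q k" and c2: "q k < x k - s + l" using l by linarith+
      have b1: "(x k - s) / l < q k / l" using c1 l by (intro divide_strict_right_mono) auto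
      have "q k / l < (x k - s + l) / l" using c2 l by (intro divide_strict_right_mono) auto
      also have "\<dots> = (x k - s) / l + 1" using l by (simp add: add_divide_distrib)
      finally have b2: "q k / l < (x k - s) / l + 1" .
      have "a k \<le> \<lfloor>q k / l\<rfloor>" unfolding a_def using b1 by (intro floor_mono) simp
      moreover have "\<lfloor>q k / l\<rfloor> \<le> a k + 1"
      proof -
        have "(x k - s) / l < of_int (a k) + 1" unfolding a_def by (rule real_of_int_floor_add_one_gt)
        then have "q k / l < of_int (a k + 2)" using b2 by simp
        then have "\<lfloor>q k / l\<rfloor> < a k + 2" by (simp add: floor_less_iff)
        then show ?thesis by simp
      qed
      ultimately show ?thesis by auto
    qed
    then have fl: "\<forall>k<d. \<lfloor>q k / (2^i * (\<delta> / real d))\<rfloor> \<in> {a k, a k + 1}"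
      unfolding l_def e_def by blast
    have "idx d \<delta> i q \<in> V" unfolding V_def idx_def restrict_PiE_iff using fl by blast
    then show "q \<in> (\<Union>v\<in>V. {q\<in>A. idx d \<delta> i q = v})" using q by auto
  qed
  have "real (card (eball d x s \<inter> A)) \<le> real (card (\<Union>v\<in>V. {q\<in>A. idx d \<delta> i q = v}))"
    using sub fin finV by (intro of_nat_mono card_mono) auto
  also have "\<dots> \<le> real (\<Sum>v\<in>V. card {q\<in>A. idx d \<delta> i q = v})"
    by (intro of_nat_mono card_UN_le finV)
  also have "\<dots> = (\<Sum>v\<in>V. real (card {q\<in>A. idx d \<delta> i q = v}))" by simp
  also have "\<dots> \<le> (\<Sum>v\<in>V. B * 2^i)" using cub by (intro sum_mono) auto
  also have "\<dots> = 2^d * B * 2^i" using cardV by simp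
  also have "\<dots> \<le> 2^d * B * (4 * s * real d / \<delta>)"
  proof -
    have "2^i * e < 4 * s" using i2 .
    moreover have "2^i * \<delta> = (2^i * e) * real d" unfolding e_def using d by simp
    ultimately have "2^i * \<delta> < 4 * s * real d" using d by (metis mult_strict_right_mono of_nat_0_less_iff
      less_le_trans zero_less_one)
    then have "2^i < 4 * s * real d / \<delta>" using dl by (simp add: pos_less_divide_eq)
    then show ?thesis using B by (intro mult_left_mono) auto
  qed
  also have "\<dots> = B * 2^(d+2) * real d * (s / \<delta>)" by (simp add: power_add)
  finally show ?thesis .
qed


lemma mc_cong: "(\<forall>k<d. u k = w k) \<Longrightarrow> mc d n u = mc d n w"
proof (induction n arbitrary: u w)
  case 0 then show ?case by simp
next
  case (Suc n)
  have "dig d u = dig d w" unfolding dig_def using Suc.prems by (intro sum.cong) auto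
  moreover have "mc d n (\<lambda>k. u k div 2) = mc d n (\<lambda>k. w k div 2)" using Suc by auto
  ultimately show ?case by simp
qed

lemma sep_subset: "separated d \<delta> W \<Longrightarrow> V \<subseteq> W \<Longrightarrow> separated d \<delta> V"
  unfolding separated_def by blast

definition goodZ :: "nat \<Rightarrow> real \<Rightarrow> real \<Rightarrow> real \<Rightarrow> (nat\<Rightarrow>real) set \<Rightarrow> bool" where
  "goodZ d \<delta> K C Z \<longleftrightarrow> (\<exists>c\<in>Rd d. \<exists>r. Z \<subseteq> eball d c r \<and> r \<ge> \<delta> * K powr (1/real d) / C \<and>
     (\<exists>Z'. Z' \<subseteq> Z \<and> r/(C*\<delta>) \<le> real (card Z') \<and> real (card Z') \<le> C*(r/\<delta>) \<and>
        frostman_le d \<delta> Z' C))"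

definition K0 :: "nat \<Rightarrow> real" where "K0 d = 2^(d+2) * real d * (4 * real d)^d"

lemma code_prop:
  assumes d: "d \<ge> 1" and dl: "\<delta> > 0"
    and p: "idx d \<delta> j p = v" and q: "idx d \<delta> j q = v" and ij: "i \<le> j"
  defines "u \<equiv> \<lambda>p k. nat (\<lfloor>p k / (\<delta> / real d)\<rfloor> - 2^j * v k)"
  shows "(\<forall>k<d. u p k < 2^j)"
    and "idx d \<delta> i p = idx d \<delta> i q \<longleftrightarrow>
         mc d j (u p) div (2^d)^i = mc d j (u q) div (2^d)^i"
proof -
  have bnd: "0 \<le> \<lfloor>y k / (\<delta> / real d)\<rfloor> - 2^j * v k \<and> \<lfloor>y k / (\<delta> / real d)\<rfloor> - 2^j * v k < 2^j"
    if "idx d \<delta> j y = v" "k < d" for y k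
  proof -
    have "v k = \<lfloor>y k / (2^j * (\<delta> / real d))\<rfloor>" using that idx_app[OF that(2)] by metis
    then have vk: "v k = \<lfloor>y k / (\<delta> / real d)\<rfloor> div 2^j" by (simp add: floor_lvl)
    define z where "z = \<lfloor>y k / (\<delta> / real d)\<rfloor>"
    have h1: "z = 2^j * (z div 2^j) + z mod 2^j" by (rule div_mult_mod_eq[symmetric, of z "2^j", simplified mult.commute])
    have h2: "0 \<le> z mod 2^j" "z mod 2^j < 2^j" by simp_all
    show ?thesis unfolding vk z_def[symmetric] using h1 h2 by linarith
  qed
  have repr: "\<lfloor>y k / (\<delta> / real d)\<rfloor> = 2^j * v k + int (u y k)"
    if "idx d \<delta> j y = v" "k < d" for y k
    using bnd[OF that] unfolding u_def by simp
  show "\<forall>k<d. u p k < 2^j"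
  proof (intro allI impI)
    fix k assume "k < d"
    then show "u p k < 2^j" using bnd[OF p \<open>k<d\<close>] unfolding u_def by simp
  qed
  have lv: "\<lfloor>y k / (2^i * (\<delta> / real d))\<rfloor> = 2^(j-i) * v k + int (u y k div 2^i)"
    if "idx d \<delta> j y = v" "k < d" for y k
  proof -
    have "\<lfloor>y k / (2^i * (\<delta> / real d))\<rfloor> = \<lfloor>y k / (\<delta> / real d)\<rfloor> div 2^i" by (rule floor_lvl)
    also have "\<dots> = (2^i * (2^(j-i) * v k) + int (u y k)) div 2^i"
    proof -
      have "(2::int)^j = 2^i * 2^(j-i)" using ij by (simp add: power_add[symmetric])
      then show ?thesis using repr[OF that] by (simp add: mult.assoc)
    qed
    also have "\<dots> = 2^(j-i) * v k + int (u y k) div 2^i" by simp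
    also have "\<dots> = 2^(j-i) * v k + int (u y k div 2^i)" by (simp add: zdiv_int)
    finally show ?thesis .
  qed
  have "idx d \<delta> i p = idx d \<delta> i q \<longleftrightarrow> (\<forall>k<d. u p k div 2^i = u q k div 2^i)"
    unfolding idx_eq using lv[OF p] lv[OF q] by auto
  also have "\<dots> \<longleftrightarrow> mc d (j-i) (\<lambda>k. u p k div 2^i) = mc d (j-i) (\<lambda>k. u q k div 2^i)"
  proof
    assume "\<forall>k<d. u p k div 2^i = u q k div 2^i"
    then show "mc d (j-i) (\<lambda>k. u p k div 2^i) = mc d (j-i) (\<lambda>k. u q k div 2^i)" by (rule mc_cong)
  next
    assume e: "mc d (j-i) (\<lambda>k. u p k div 2^i) = mc d (j-i) (\<lambda>k. u q k div 2^i)"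
    have b: "\<forall>k<d. u y k div 2^i < 2^(j-i)" if "idx d \<delta> j y = v" for y
    proof (intro allI impI)
      fix k assume "k < d"
      have "u y k < 2^j" using bnd[OF that \<open>k<d\<close>] unfolding u_def by simp
      also have "\<dots> = 2^(j-i) * 2^i" using ij by (simp add: power_add[symmetric])
      finally show "u y k div 2^i < 2^(j-i)" by (simp add: less_mult_imp_div_less)
    qed
    show "\<forall>k<d. u p k div 2^i = u q k div 2^i" by (rule mc_inj[OF b[OF p] b[OF q] e])
  qed
  also have "\<dots> \<longleftrightarrow> mc d j (u p) div (2^d)^i = mc d j (u q) div (2^d)^i"
    using mc_div[OF ij, of d "u p"] mc_div[OF ij, of d "u q"] by simp
  finally show "idx d \<delta> i p = idx d \<delta> i q \<longleftrightarrow>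
         mc d j (u p) div (2^d)^i = mc d j (u q) div (2^d)^i" .
qed

lemma powr_d_pow: assumes "K > 0" "d \<ge> 1" shows "(K powr (1 / real d))^d = K"
proof -
  have "(K powr (1 / real d))^d = K powr (1 / real d * real d)"
    using assms by (simp add: powr_realpow[symmetric] powr_powr)
  also have "\<dots> = K" using assms by simp
  finally show ?thesis .
qed

lemma good_cube:
  assumes d: "d \<ge> 1" and dl: "\<delta> > 0" and K: "K \<ge> K0 d"
    and fin: "finite W" and WR: "W \<subseteq> Rd d" and sep: "separated d \<delta> W"
    and minl: "\<forall>i<j. \<forall>w. real (card {q\<in>W. idx d \<delta> i q = w}) \<le> K / 2^(d+2) * 2^i / real d"
    and hv: "real (card {q\<in>W. idx d \<delta> j q = v}) > K / 2^(d+2) * 2^j / real d"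
  shows "goodZ d \<delta> K (4 * K0 d) {q\<in>W. idx d \<delta> j q = v}"
proof -
  define S where "S = {q\<in>W. idx d \<delta> j q = v}"
  define Kp where "Kp = K / 2^(d+2)"
  define C where "C = 4 * K0 d"
  define e where "e = \<delta> / real d"
  define A where "A = (2::real)^(d+2) * real d"
  have e0: "e > 0" unfolding e_def using d dl by simp
  have dpos: "real d \<ge> 1" using d by simp
  have A1: "A \<ge> 1" unfolding A_def
    using one_le_power[of "2::real" "d+2"] dpos mult_mono[of 1 "2^(d+2)" 1 "real d"] by simp
  have pw1: "(4 * real d)^d \<ge> 1" using dpos by (intro one_le_power) simp
  have K0ge: "K0 d \<ge> A" unfolding K0_def A_def
    using pw1 A1 mult_left_mono[OF pw1, of "2^(d+2) * real d"] by simp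
  have CA: "C \<ge> 4 * A" unfolding C_def using K0ge by simp
  have Kpge: "Kp \<ge> real d * (4 * real d)^d"
  proof -
    have "Kp \<ge> K0 d / 2^(d+2)" unfolding Kp_def using K by (simp add: divide_right_mono)
    then show ?thesis unfolding K0_def by simp
  qed
  have "1 * 1 \<le> real d * (4 * real d)^d" using dpos pw1 by (intro mult_mono) auto
  then have Kp1: "Kp \<ge> 1" using Kpge by simp
  have "K = Kp * 2^(d+2)" unfolding Kp_def by simp
  moreover have "0 < Kp * 2^(d+2)" using Kp1 by simp
  ultimately have K1: "K > 0" by simp
  have finS: "finite S" unfolding S_def using fin by simp
  have SW: "S \<subseteq> W" unfolding S_def by auto
  have cS: "real (card S) \<le> (2^j)^d"
    using card_cube_le[OF sep d dl, of j v] unfolding S_def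
    by (metis of_nat_mono of_nat_numeral of_nat_power)
  have hvS: "real (card S) > Kp * 2^j / real d" using hv unfolding S_def Kp_def .
  have pj1: "(2::real)^j \<ge> 1" by simp
  have j4: "(2::real)^j > 4 * real d"
  proof -
    have "(4 * real d)^d * 1 \<le> (4 * real d)^d * 2^j" using pj1 pw1 by (intro mult_left_mono) auto
    also have "\<dots> = real d * (4 * real d)^d * 2^j / real d" using dpos by simp
    also have "\<dots> \<le> Kp * 2^j / real d"
      using Kpge by (intro divide_right_mono mult_right_mono) auto
    finally have "(4 * real d)^d < (2^j)^d" using hvS cS by linarith
    then show ?thesis by (rule power_less_imp_less_base) simp
  qed
  have rj: "(2::real)^j \<ge> K powr (1 / real d) / C"
  proof -
    have "Kp * 2^j / real d \<ge> Kp / real d" using Kp1 pj1 dpos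
      by (intro divide_right_mono) (simp_all add: mult_le_cancel_left1)
    moreover have "Kp / real d = K / A" unfolding Kp_def A_def by simp
    ultimately have big: "(2^j)^d > K / A" using hvS cS by linarith
    have "2^j \<ge> K powr (1 / real d) / A"
    proof (rule ccontr)
      assume "\<not> ?thesis"
      then have "2^j < K powr (1 / real d) / A" by simp
      then have "(2^j)^d < (K powr (1 / real d) / A)^d"
        using d by (intro power_strict_mono) auto
      also have "\<dots> = K / A^d" using powr_d_pow[OF K1 d] by (simp add: power_divide)
      also have "\<dots> \<le> K / A"
      proof -
        have "A^1 \<le> A^d" using A1 d by (intro power_increasing) auto
        then show ?thesis using K1 A1 by (intro divide_left_mono) auto
      qed
      finally show False using big by simp
    qed
    moreover have "K powr (1 / real d) / C \<le> K powr (1 / real d) / A"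
      using CA A1 by (intro divide_left_mono) auto
    ultimately show ?thesis by linarith
  qed
  define l where "l = 2^j * e"
  have l0: "l > 0" unfolding l_def using e0 by simp
  define c where "c = (\<lambda>k. if k < d then (real_of_int (v k) + 1/2) * l else 0)"
  have cR: "c \<in> Rd d" unfolding c_def Rd_def by auto
  have ball: "S \<subseteq> eball d c (2^j * \<delta>)"
  proof
    fix q assume qS: "q \<in> S"
    have "\<forall>k<d. \<bar>c k - q k\<bar> < 2^j * \<delta> / real d"
    proof (intro allI impI)
      fix k assume k: "k < d"
      have fl: "\<lfloor>q k / l\<rfloor> = v k" using qS idx_app[OF k, of \<delta> j q] unfolding S_def l_def e_def by auto
      have "real_of_int (v k) \<le> q k / l" "q k / l < real_of_int (v k) + 1"
        using fl of_int_floor_le[of "q k / l"] real_of_int_floor_add_one_gt[of "q k / l"] by auto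
      then have "real_of_int (v k) * l \<le> q k" "q k < (real_of_int (v k) + 1) * l"
        using l0 by (auto simp: field_simps)
      then have "\<bar>c k - q k\<bar> \<le> l / 2" unfolding c_def using k by (auto simp: field_simps abs_le_iff)
      also have "\<dots> < l" using l0 by simp
      also have "l = 2^j * \<delta> / real d" unfolding l_def e_def by simp
      finally show "\<bar>c k - q k\<bar> < 2^j * \<delta> / real d" .
    qed
    then have "edist d c q < 2^j * \<delta>" using sq_sum_lt[OF d] dl by simp
    then show "q \<in> eball d c (2^j * \<delta>)" using qS SW WR unfolding eball_def by auto
  qed
  define u where "u = (\<lambda>p k. nat (\<lfloor>p k / (\<delta> / real d)\<rfloor> - 2^j * v k))"
  define code where "code p = mc d j (u p)" for p
  have cp: "idx d \<delta> i p = idx d \<delta> i q \<longleftrightarrow> code p div (2^d)^i = code q div (2^d)^i"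
    if "p \<in> S" "q \<in> S" "i \<le> j" for p q i
    using code_prop(2)[OF d dl _ _ that(3), of p v q] that unfolding S_def code_def u_def by auto
  have inj: "inj_on code S"
  proof (rule inj_onI)
    fix p q assume pq: "p \<in> S" "q \<in> S" "code p = code q"
    then have "idx d \<delta> 0 p = idx d \<delta> 0 q" using cp[OF pq(1,2), of 0] by simp
    then show "p = q" using sep_idx0[OF sep _ _ d dl] pq SW by auto
  qed
  define M where "M = nat \<lceil>Kp\<rceil>"
  have M1: "M \<ge> 1" unfolding M_def using Kp1 by linarith
  have MKp: "real M \<ge> Kp" "real M \<le> 2 * Kp" unfolding M_def using Kp1
    by (simp_all add: of_nat_nat) linarith+
  obtain S' where S'S: "S' \<subseteq> S" and cS': "card S div M \<le> card S'"
    and thn: "\<forall>a b. real (card {q\<in>S'. a \<le> code q \<and> code q < b})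
       \<le> real (card {q\<in>S. a \<le> code q \<and> code q < b}) / real M + 2"
    using thin[OF finS inj M1] by blast
  define t where "t = 2^j div (4 * d)"
  have t1: "t \<ge> 1" and t2: "2^j < 4 * d * (t + 1)" and t3: "4 * d * t \<le> 2^j"
  proof -
    have "real (4 * d) < real (2^j)" using j4 by simp
    then have jj: "4 * d < 2^j" by (simp only: of_nat_less_iff)
    show "t \<ge> 1" unfolding t_def using jj d by (simp add: div_greater_zero_iff Suc_le_eq)
    have "2^j mod (4*d) < 4 * d" using d by simp
    show "2^j < 4 * d * (t + 1)"
    proof -
      have e: "4 * d * t + 2^j mod (4 * d) = (2::nat)^j" unfolding t_def by (rule mult_div_mod_eq)
      have "4 * d * (t + 1) = 4 * d * t + 4 * d" by simp
      then show ?thesis using e \<open>2^j mod (4*d) < 4 * d\<close> by linarith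
    qed
    show "4 * d * t \<le> 2^j" unfolding t_def by (rule times_div_less_eq_dividend)
  qed
  have "real (4 * d * t) \<le> real (2^j)" using t3 by (rule of_nat_mono)
  then have tr1: "real t * (4 * real d) \<le> 2^j" by (simp add: mult.commute)
  have tle: "real t * 1 \<le> real t * (4 * real d)" using dpos by (intro mult_left_mono) auto
  have tr2: "2^j < 8 * real d * real t"
  proof -
    have "real (2^j) < real (4 * d * (t + 1))" using t2 by (simp only: of_nat_less_iff)
    then have "(2::real)^j < 4 * real d * (real t + 1)" by (simp add: distrib_left)
    also have "\<dots> \<le> 4 * real d * (2 * real t)" using t1 by (intro mult_left_mono) auto
    finally show ?thesis by simp
  qed
  have tS': "t \<le> card S'"
  proof -
    have a1: "real (card S) < real M * (real (card S div M) + 1)"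
    proof -
      have "card S mod M < M" using M1 by simp
      moreover have "card S div M * M + card S mod M = card S" by (rule div_mult_mod_eq)
      ultimately have "card S < card S div M * M + M" by linarith
      then have "card S < M * (card S div M + 1)" by (simp add: algebra_simps)
      then have "real (card S) < real (M * (card S div M + 1))" by (simp only: of_nat_less_iff)
      then show ?thesis by (simp add: distrib_left)
    qed
    have "Kp * 2^j / real d < real M * (real (card S div M) + 1)" using a1 hvS by linarith
    also have "\<dots> \<le> 2 * Kp * (real (card S div M) + 1)" using MKp by (intro mult_right_mono) auto
    finally have ff: "Kp * 2^j / real d < 2 * Kp * (real (card S div M) + 1)" .
    have "2^j / real d < 2 * (real (card S div M) + 1)"
    proof (rule ccontr)
      assume "\<not> ?thesis"
      then have "Kp * (2 * (real (card S div M) + 1)) \<le> Kp * (2^j / real d)"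
        using Kp1 by (intro mult_left_mono) auto
      moreover have "Kp * (2^j / real d) = Kp * 2^j / real d" by simp
      moreover have "Kp * (2 * (real (card S div M) + 1)) = 2 * Kp * (real (card S div M) + 1)" by simp
      ultimately show False using ff by linarith
    qed
    then have "2^j / (2 * real d) - 1 < real (card S div M)" using dpos by (simp add: field_simps)
    moreover have "2^j / (4 * real d) \<le> 2^j / (2 * real d) - 1" using j4 dpos by (simp add: field_simps)
    moreover have "real t \<le> 2^j / (4 * real d)" using tr1 dpos by (simp add: field_simps)
    ultimately have "real t < real (card S div M)" by linarith
    then show ?thesis using cS' by linarith
  qed
  obtain Z' where Z'S': "Z' \<subseteq> S'" and cZ': "card Z' = t" and finZ': "finite Z'"
    using obtain_subset_with_card_n[OF tS'] by blast
  have Z'S: "Z' \<subseteq> S" using Z'S' S'S by auto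
  have cub: "\<forall>i w. real (card {q\<in>Z'. idx d \<delta> i q = w}) \<le> 3 * 2^i"
  proof (intro allI)
    fix i w
    show "real (card {q\<in>Z'. idx d \<delta> i q = w}) \<le> 3 * 2^i"
    proof (cases "j \<le> i")
      case True
      have "card {q\<in>Z'. idx d \<delta> i q = w} \<le> card Z'" using finZ' by (intro card_mono) auto
      then have "real (card {q\<in>Z'. idx d \<delta> i q = w}) \<le> real t" using cZ' by simp
      also have "\<dots> \<le> 2^j" using tr1 tle by linarith
      also have "\<dots> \<le> 2^i" using True by (intro power_increasing) auto
      finally have "real (card {q\<in>Z'. idx d \<delta> i q = w}) \<le> 2^i" .
      moreover have "(0::real) \<le> 2^i" by simp
      ultimately show ?thesis by linarith
    next
      case False
      then have ij: "i < j" by simp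
      show ?thesis
      proof (cases "{q\<in>Z'. idx d \<delta> i q = w} = {}")
        case True show ?thesis by (subst True) simp
      next
        case False
        then obtain p0 where p0: "p0 \<in> Z'" "idx d \<delta> i p0 = w" by auto
        define D where "D = ((2::nat)^d) ^ i"
        have D0: "D > 0" unfolding D_def by simp
        define c0 where "c0 = code p0 div D"
        have iff: "idx d \<delta> i q = w \<longleftrightarrow> (D * c0 \<le> code q \<and> code q < D * c0 + D)" if "q \<in> S" for q
        proof -
          have "idx d \<delta> i q = w \<longleftrightarrow> code q div D = c0"
          proof -
            have "p0 \<in> S" using p0 Z'S by auto
            then show ?thesis using cp[OF that \<open>p0 \<in> S\<close>, of i] p0 ij unfolding D_def c0_def by auto
          qed
          also have "\<dots> \<longleftrightarrow> (D * c0 \<le> code q \<and> code q < D * c0 + D)"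
          proof
            assume h: "code q div D = c0"
            have "D * (code q div D) + code q mod D = code q" by (rule mult_div_mod_eq)
            then have "D * c0 + code q mod D = code q" using h by simp
            moreover have "code q mod D < D" using D0 by simp
            ultimately show "D * c0 \<le> code q \<and> code q < D * c0 + D" by linarith
          next
            assume "D * c0 \<le> code q \<and> code q < D * c0 + D"
            then show "code q div D = c0" by (intro div_nat_eqI) auto
          qed
          finally show ?thesis .
        qed
        have sub1: "{q\<in>Z'. idx d \<delta> i q = w} \<subseteq> {q\<in>S'. D * c0 \<le> code q \<and> code q < D * c0 + D}"
          using iff Z'S Z'S' by auto
        have eq2: "{q\<in>S. D * c0 \<le> code q \<and> code q < D * c0 + D} = {q\<in>S. idx d \<delta> i q = w}"
          using iff by auto
        have finS': "finite S'" using S'S finS finite_subset by auto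
        have "real (card {q\<in>Z'. idx d \<delta> i q = w}) \<le> real (card {q\<in>S'. D * c0 \<le> code q \<and> code q < D * c0 + D})"
          using sub1 finS' by (intro of_nat_mono card_mono) auto
        also have "\<dots> \<le> real (card {q\<in>S. D * c0 \<le> code q \<and> code q < D * c0 + D}) / real M + 2"
          using thn by blast
        also have "\<dots> = real (card {q\<in>S. idx d \<delta> i q = w}) / real M + 2"
          by (simp only: eq2)
        also have "\<dots> \<le> (Kp * 2^i / real d) / real M + 2"
        proof -
          have "card {q\<in>S. idx d \<delta> i q = w} \<le> card {q\<in>W. idx d \<delta> i q = w}"
            using fin SW by (intro card_mono) auto
          then have h1: "real (card {q\<in>S. idx d \<delta> i q = w}) \<le> real (card {q\<in>W. idx d \<delta> i q = w})"
            by (rule of_nat_mono)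
          have h2: "real (card {q\<in>W. idx d \<delta> i q = w}) \<le> Kp * 2^i / real d"
            using minl ij unfolding Kp_def by blast
          from h1 h2 have "real (card {q\<in>S. idx d \<delta> i q = w}) \<le> Kp * 2^i / real d" by (rule order_trans)
          then have "real (card {q\<in>S. idx d \<delta> i q = w}) / real M \<le> (Kp * 2^i / real d) / real M"
            using M1 by (intro divide_right_mono) auto
          then show ?thesis by linarith
        qed
        also have "\<dots> \<le> 2^i + 2"
        proof -
          have "(Kp * 2^i / real d) / real M \<le> (real M * 2^i / real d) / real M"
            using MKp dpos by (intro divide_right_mono mult_right_mono) auto
          also have "\<dots> = 2^i / real d" using M1 by simp
          also have "\<dots> \<le> 2^i" using dpos by (simp add: divide_le_eq)
          finally show ?thesis by simp
        qed
        also have "\<dots> \<le> 3 * 2^i" by simp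
        finally show ?thesis .
      qed
    qed
  qed
  have frost: "frostman_le d \<delta> Z' C"
    unfolding frostman_le_def
  proof (intro ballI allI impI)
    fix x s assume "x \<in> Rd d" "s \<ge> \<delta>"
    have "real (card (eball d x s \<inter> Z')) \<le> 3 * 2^(d+2) * real d * (s / \<delta>)"
      by (rule cube_ball[OF d dl finZ' _ cub \<open>s \<ge> \<delta>\<close>]) simp
    also have "\<dots> \<le> C * (s / \<delta>)"
    proof (rule mult_right_mono)
      have X: "3 * 2^(d+2) * real d = 12 * (2^d * real d)" by (simp add: power_add)
      have Y: "4 * A = 16 * (2^d * real d)" unfolding A_def by (simp add: power_add)
      have "(0::real) \<le> 2^d * real d" by simp
      then show "3 * 2^(d+2) * real d \<le> C" using X Y CA by linarith
      show "0 \<le> s / \<delta>" using dl \<open>s \<ge> \<delta>\<close> by simp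
    qed
    finally show "real (card (eball d x s \<inter> Z')) \<le> C * (s / \<delta>)" .
  qed
  have C8: "C \<ge> 8 * real d"
  proof -
    have Y: "4 * A = 16 * (2^d * real d)" unfolding A_def by (simp add: power_add)
    have "1 * real d \<le> 2^d * real d" using dpos by (intro mult_right_mono) auto
    then show ?thesis using Y CA by linarith
  qed
  have card1: "2^j * \<delta> / (C * \<delta>) \<le> real (card Z')"
  proof -
    have "2^j * \<delta> / (C * \<delta>) = 2^j / C" using dl by simp
    also have "\<dots> \<le> 2^j / (8 * real d)" using C8 dpos by (intro divide_left_mono) auto
    also have "\<dots> \<le> real t" using tr2 dpos by (simp add: field_simps)
    finally show ?thesis using cZ' by simp
  qed
  have card2: "real (card Z') \<le> C * (2^j * \<delta> / \<delta>)"
  proof -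
    have "real t \<le> 2^j" using tr1 tle by linarith
    also have "\<dots> \<le> C * 2^j" using CA A1 by simp
    finally show ?thesis using cZ' dl by simp
  qed
  have rr: "2^j * \<delta> \<ge> \<delta> * K powr (1 / real d) / C"
  proof -
    have "\<delta> * (K powr (1 / real d) / C) \<le> \<delta> * 2^j" using rj dl by (intro mult_left_mono) auto
    then show ?thesis by (simp add: mult.commute)
  qed
  show ?thesis unfolding goodZ_def S_def[symmetric] C_def[symmetric]
    using cR ball rr Z'S card1 card2 frost by blast
qed

lemma K0_pos: "d \<ge> 1 \<Longrightarrow> K0 d \<ge> 1"
proof -
  assume d: "d \<ge> 1"
  have a: "(1::real) \<le> 2^(d+2)" by (rule one_le_power) simp
  have b: "(1::real) \<le> (4 * real d)^d" using d by (intro one_le_power) simp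
  have "1 * 1 \<le> 2^(d+2) * real d" using a d by (intro mult_mono) auto
  then have "1 * 1 \<le> (2^(d+2) * real d) * (4 * real d)^d" using b by (intro mult_mono) auto
  then show ?thesis unfolding K0_def by simp
qed

lemma decomp:
  assumes d: "d \<ge> 1" and dl: "\<delta> > 0" and K: "K \<ge> K0 d"
  shows "finite W \<Longrightarrow> W \<subseteq> Rd d \<Longrightarrow> separated d \<delta> W \<Longrightarrow>
    \<exists>Y (Z::nat \<Rightarrow> (nat\<Rightarrow>real) set) (N::nat). W = Y \<union> (\<Union>i<N. Z i) \<and> (\<forall>i<N. Y \<inter> Z i = {}) \<and>
      (\<forall>i<N. \<forall>j<N. i \<noteq> j \<longrightarrow> Z i \<inter> Z j = {}) \<and> frostman_le d \<delta> Y K \<and>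
      (\<forall>i<N. goodZ d \<delta> K (4 * K0 d) (Z i))"
proof (induction "card W" arbitrary: W rule: less_induct)
  case less
  define Kp where "Kp = K / 2^(d+2)"
  have K1: "K \<ge> 1" using K K0_pos[OF d] by linarith
  have Kp0: "Kp \<ge> 0" unfolding Kp_def using K1 by simp
  show ?case
  proof (cases "\<exists>i v. real (card {q\<in>W. idx d \<delta> i q = v}) > Kp * 2^i / real d")
    case False
    then have cub: "\<forall>i v. real (card {q\<in>W. idx d \<delta> i q = v}) \<le> Kp / real d * 2^i"
      by (auto simp: not_less)
    have fr: "frostman_le d \<delta> W K"
      unfolding frostman_le_def
    proof (intro ballI allI impI)
      fix x s assume "x \<in> Rd d" "s \<ge> \<delta>"
      have "real (card (eball d x s \<inter> W)) \<le> Kp / real d * 2^(d+2) * real d * (s / \<delta>)"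
        by (rule cube_ball[OF d dl less.prems(1) _ cub \<open>s \<ge> \<delta>\<close>]) (use Kp0 in simp)
      also have "\<dots> = K * (s / \<delta>)" unfolding Kp_def using d by simp
      finally show "real (card (eball d x s \<inter> W)) \<le> K * (s / \<delta>)" .
    qed
    show ?thesis
      apply (rule exI[where x=W])
      apply (rule exI[where x="\<lambda>_::nat. {}::(nat\<Rightarrow>real) set"])
      apply (rule exI[where x="0::nat"])
      using fr by simp
  next
    case True
    define P where "P i \<longleftrightarrow> (\<exists>v. real (card {q\<in>W. idx d \<delta> i q = v}) > Kp * 2^i / real d)" for i
    define j where "j = (LEAST i. P i)"
    have ex: "\<exists>i. P i" using True unfolding P_def by blast
    have "P j" unfolding j_def using ex by (rule LeastI_ex)
    then obtain v where hv: "real (card {q\<in>W. idx d \<delta> j q = v}) > Kp * 2^j / real d"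
      unfolding P_def by blast
    have minl: "\<forall>i<j. \<forall>w. real (card {q\<in>W. idx d \<delta> i q = w}) \<le> K / 2^(d+2) * 2^i / real d"
    proof (intro allI impI)
      fix i w assume "i < j"
      then have "\<not> P i" unfolding j_def by (rule not_less_Least)
      then show "real (card {q\<in>W. idx d \<delta> i q = w}) \<le> K / 2^(d+2) * 2^i / real d"
        unfolding P_def Kp_def by (auto simp: not_less)
    qed
    define S where "S = {q\<in>W. idx d \<delta> j q = v}"
    have gS: "goodZ d \<delta> K (4 * K0 d) S"
      unfolding S_def by (rule good_cube[OF d dl K less.prems minl]) (use hv in \<open>simp add: Kp_def\<close>)
    have "0 \<le> Kp * 2^j / real d" using Kp0 by simp
    then have "card S > 0" using hv unfolding S_def by linarith
    then have Sne: "S \<noteq> {}" by auto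
    have SW: "S \<subseteq> W" unfolding S_def by auto
    define W' where "W' = W - S"
    have lt: "card W' < card W" unfolding W'_def
    proof (rule psubset_card_mono[OF less.prems(1)])
      show "W - S \<subset> W" using Sne SW by blast
    qed
    have "\<exists>Y (Z::nat \<Rightarrow> (nat\<Rightarrow>real) set) (N::nat). W' = Y \<union> (\<Union>i<N. Z i) \<and> (\<forall>i<N. Y \<inter> Z i = {}) \<and>
      (\<forall>i<N. \<forall>j<N. i \<noteq> j \<longrightarrow> Z i \<inter> Z j = {}) \<and> frostman_le d \<delta> Y K \<and>
      (\<forall>i<N. goodZ d \<delta> K (4 * K0 d) (Z i))"
    proof (rule less.hyps[OF lt])
      show "finite W'" unfolding W'_def using less.prems(1) by simp
      show "W' \<subseteq> Rd d" unfolding W'_def using less.prems(2) by blast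
      show "separated d \<delta> W'" unfolding W'_def by (rule sep_subset[OF less.prems(3)]) blast
    qed
    then obtain Y Z N where Yall: "W' = Y \<union> (\<Union>i<(N::nat). (Z::nat \<Rightarrow> (nat\<Rightarrow>real) set) i) \<and> (\<forall>i<N. Y \<inter> Z i = {}) \<and>
      (\<forall>i<N. \<forall>j<N. i \<noteq> j \<longrightarrow> Z i \<inter> Z j = {}) \<and> frostman_le d \<delta> Y K \<and>
      (\<forall>i<N. goodZ d \<delta> K (4 * K0 d) (Z i))" by (elim exE) (rule that)
    note Y = Yall[THEN conjunct1] Yall[THEN conjunct2, THEN conjunct1]
      Yall[THEN conjunct2, THEN conjunct2, THEN conjunct1]
      Yall[THEN conjunct2, THEN conjunct2, THEN conjunct2, THEN conjunct1]
      Yall[THEN conjunct2, THEN conjunct2, THEN conjunct2, THEN conjunct2]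
    define Z2 where "Z2 = Z(N := S)"
    have U: "(\<Union>i<Suc N. Z2 i) = (\<Union>i<N. Z i) \<union> S"
      unfolding Z2_def lessThan_Suc by auto
    have YW: "Y \<subseteq> W'" using Y(1) by blast
    have ZW: "Z i \<subseteq> W'" if "i < N" for i using Y(1) that by blast
    have W'S: "W' \<inter> S = {}" unfolding W'_def by blast
    have YS: "Y \<inter> S = {}" using YW W'S by blast
    have ZS: "Z i \<inter> S = {}" if "i < N" for i using ZW[OF that] W'S by blast
    have "W = W' \<union> S" unfolding W'_def using SW by blast
    then have "W = Y \<union> (\<Union>i<Suc N. Z2 i)" unfolding U Y(1) by blast
    moreover have "\<forall>i<Suc N. Y \<inter> Z2 i = {}" using Y(2) YS unfolding Z2_def by (auto simp: less_Suc_eq)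
    moreover have "\<forall>i<Suc N. \<forall>j<Suc N. i \<noteq> j \<longrightarrow> Z2 i \<inter> Z2 j = {}"
      using Y(3) ZS unfolding Z2_def by (auto simp: less_Suc_eq)
    moreover have "\<forall>i<Suc N. goodZ d \<delta> K (4 * K0 d) (Z2 i)"
      using Y(5) gS unfolding Z2_def by (auto simp: less_Suc_eq)
    ultimately have "W = Y \<union> (\<Union>i<Suc N. Z2 i) \<and> (\<forall>i<Suc N. Y \<inter> Z2 i = {}) \<and>
      (\<forall>i<Suc N. \<forall>j<Suc N. i \<noteq> j \<longrightarrow> Z2 i \<inter> Z2 j = {}) \<and> frostman_le d \<delta> Y K \<and>
      (\<forall>i<Suc N. goodZ d \<delta> K (4 * K0 d) (Z2 i))" using Y(4) by (intro conjI)
    then show ?thesis by (intro exI[where x=Y] exI[where x=Z2] exI[where x="Suc N"])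
  qed
qed


lemma single_good:
  assumes d: "d \<ge> 1" and dl: "\<delta> > 0" and x: "x \<in> Rd d" and K1: "1 \<le> K" and KK: "K \<le> K0 d"
  shows "goodZ d \<delta> K (4 * K0 d) {x}"
proof -
  define C where "C = 4 * K0 d"
  have C4: "C \<ge> 4" unfolding C_def using K0_pos[OF d] by simp
  define Kr where "Kr = K powr (1 / real d)"
  have Kr1: "Kr \<ge> 1" unfolding Kr_def using K1 by (intro ge_one_powr_ge_zero) auto
  have KrK: "Kr \<le> K"
  proof -
    have "K powr (1 / real d) \<le> K powr 1" using K1 d by (intro powr_mono) auto
    then show ?thesis unfolding Kr_def using K1 by simp
  qed
  have KrC: "Kr \<le> C * C"
  proof -
    have "C \<le> C * C" using C4 by (simp add: mult_le_cancel_left1)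
    then show ?thesis using KrK KK K0_pos[OF d] unfolding C_def by linarith
  qed
  define r where "r = \<delta> * Kr / C"
  have r0: "r > 0" unfolding r_def using dl Kr1 C4 by simp
  have ball: "{x} \<subseteq> eball d x r" using x r0 unfolding eball_def edist_def by simp
  have c1: "r / (C * \<delta>) \<le> real (card {x})"
  proof -
    have "r / (C * \<delta>) = Kr / (C * C)" unfolding r_def using dl C4 by (simp add: field_simps)
    also have "\<dots> \<le> 1" using KrC C4 by simp
    finally show ?thesis by simp
  qed
  have c2: "real (card {x}) \<le> C * (r / \<delta>)"
  proof -
    have "C * (r / \<delta>) = Kr" unfolding r_def using dl C4 by (simp add: field_simps)
    then show ?thesis using Kr1 by simp
  qed
  have fr: "frostman_le d \<delta> {x} C"
    unfolding frostman_le_def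
  proof (intro ballI allI impI)
    fix y s assume "y \<in> Rd d" "s \<ge> \<delta>"
    have "card (eball d y s \<inter> {x}) \<le> card {x}" by (intro card_mono) auto
    then have "real (card (eball d y s \<inter> {x})) \<le> 1" by simp
    also have "1 \<le> C * (s / \<delta>)"
    proof -
      have "1 \<le> s / \<delta>" using \<open>s \<ge> \<delta>\<close> dl by simp
      then have "1 * 1 \<le> C * (s / \<delta>)" using C4 by (intro mult_mono) auto
      then show ?thesis by simp
    qed
    finally show "real (card (eball d y s \<inter> {x})) \<le> C * (s / \<delta>)" .
  qed
  show ?thesis unfolding goodZ_def C_def[symmetric]
    using x ball r_def Kr_def c1 c2 fr by (intro bexI[of _ x] exI[of _ r] conjI exI[of _ "{x}"]) auto
qed

lemma good_conv:
  assumes "goodZ d \<delta> K C Z"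
  shows "\<exists>c\<in>Rd d. \<exists>r_i. Z \<subseteq> eball d c r_i \<and>
             r_i \<ge> \<delta> * K powr (1 / real d) / C \<and>
             (\<exists>Z'. Z' \<subseteq> Z \<and>
                r_i / (C * \<delta>) \<le> real (card Z') \<and> real (card Z') \<le> C * (r_i / \<delta>) \<and>
                frostman_le d \<delta> Z' (C * (1 + \<bar>ln \<delta>\<bar>) powr 0))"
proof -
  have "(1 + \<bar>ln \<delta>\<bar>) powr 0 = 1" by simp
  then show ?thesis using assms unfolding goodZ_def by simp
qed

theorem lemma3p2:
  shows "\<exists>C'::real. \<forall>d::nat. d \<ge> 1 \<longrightarrow> (\<exists>C::real. C > 0 \<and>
    (\<forall>\<delta>::real. \<forall>X K::real. 0 < \<delta> \<and> \<delta> < 1 \<and> finite X \<and> X \<subseteq> Rd d \<and>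
       separated d \<delta> X \<and> K \<ge> 1 \<longrightarrow>
     (\<exists>Y (Z::nat \<Rightarrow> (nat \<Rightarrow> real) set) (N::nat).
        X = Y \<union> (\<Union>i<N. Z i) \<and>
        (\<forall>i<N. Y \<inter> Z i = {}) \<and>
        (\<forall>i<N. \<forall>j<N. i \<noteq> j \<longrightarrow> Z i \<inter> Z j = {}) \<and>
        frostman_le d \<delta> Y K \<and>
        (\<forall>i<N. \<exists>c\<in>Rd d. \<exists>r_i. Z i \<subseteq> eball d c r_i \<and>
             r_i \<ge> \<delta> * K powr (1 / real d) / C \<and>
             (\<exists>Z'. Z' \<subseteq> Z i \<and>
                r_i / (C * \<delta>) \<le> real (card Z') \<and> real (card Z') \<le> C * (r_i / \<delta>) \<and>
                frostman_le d \<delta> Z' (C * (1 + \<bar>ln \<delta>\<bar>) powr C'))))))"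
proof (rule exI[where x=0], intro allI impI)
  fix d :: nat assume d: "d \<ge> 1"
  show "\<exists>C::real. C > 0 \<and>
    (\<forall>\<delta>::real. \<forall>X K::real. 0 < \<delta> \<and> \<delta> < 1 \<and> finite X \<and> X \<subseteq> Rd d \<and>
       separated d \<delta> X \<and> K \<ge> 1 \<longrightarrow>
     (\<exists>Y (Z::nat \<Rightarrow> (nat \<Rightarrow> real) set) (N::nat).
        X = Y \<union> (\<Union>i<N. Z i) \<and>
        (\<forall>i<N. Y \<inter> Z i = {}) \<and>
        (\<forall>i<N. \<forall>j<N. i \<noteq> j \<longrightarrow> Z i \<inter> Z j = {}) \<and>
        frostman_le d \<delta> Y K \<and>
        (\<forall>i<N. \<exists>c\<in>Rd d. \<exists>r_i. Z i \<subseteq> eball d c r_i \<and>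
             r_i \<ge> \<delta> * K powr (1 / real d) / C \<and>
             (\<exists>Z'. Z' \<subseteq> Z i \<and>
                r_i / (C * \<delta>) \<le> real (card Z') \<and> real (card Z') \<le> C * (r_i / \<delta>) \<and>
                frostman_le d \<delta> Z' (C * (1 + \<bar>ln \<delta>\<bar>) powr 0)))))"
  proof (rule exI[where x="4 * K0 d"], intro conjI allI impI)
    show "4 * K0 d > 0" using K0_pos[OF d] by simp
    fix \<delta> :: real and X and K :: real
    assume H: "0 < \<delta> \<and> \<delta> < 1 \<and> finite X \<and> X \<subseteq> Rd d \<and> separated d \<delta> X \<and> K \<ge> 1"
    then have dl: "\<delta> > 0" and fin: "finite X" and XR: "X \<subseteq> Rd d" and sep: "separated d \<delta> X"
      and K1: "K \<ge> 1" by auto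
    show "\<exists>Y (Z::nat \<Rightarrow> (nat \<Rightarrow> real) set) (N::nat).
        X = Y \<union> (\<Union>i<N. Z i) \<and>
        (\<forall>i<N. Y \<inter> Z i = {}) \<and>
        (\<forall>i<N. \<forall>j<N. i \<noteq> j \<longrightarrow> Z i \<inter> Z j = {}) \<and>
        frostman_le d \<delta> Y K \<and>
        (\<forall>i<N. \<exists>c\<in>Rd d. \<exists>r_i. Z i \<subseteq> eball d c r_i \<and>
             r_i \<ge> \<delta> * K powr (1 / real d) / (4 * K0 d) \<and>
             (\<exists>Z'. Z' \<subseteq> Z i \<and>
                r_i / ((4 * K0 d) * \<delta>) \<le> real (card Z') \<and> real (card Z') \<le> (4 * K0 d) * (r_i / \<delta>) \<and>
                frostman_le d \<delta> Z' ((4 * K0 d) * (1 + \<bar>ln \<delta>\<bar>) powr 0)))"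
    proof (cases "K \<ge> K0 d")
      case True
      obtain Y Z N where Yall: "X = Y \<union> (\<Union>i<(N::nat). (Z::nat \<Rightarrow> (nat\<Rightarrow>real) set) i) \<and> (\<forall>i<N. Y \<inter> Z i = {}) \<and>
        (\<forall>i<N. \<forall>j<N. i \<noteq> j \<longrightarrow> Z i \<inter> Z j = {}) \<and> frostman_le d \<delta> Y K \<and>
        (\<forall>i<N. goodZ d \<delta> K (4 * K0 d) (Z i))"
        using decomp[OF d dl True fin XR sep] by (elim exE) (rule that)
      then have "(\<forall>i<N. \<exists>c\<in>Rd d. \<exists>r_i. Z i \<subseteq> eball d c r_i \<and>
             r_i \<ge> \<delta> * K powr (1 / real d) / (4 * K0 d) \<and>
             (\<exists>Z'. Z' \<subseteq> Z i \<and>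
                r_i / ((4 * K0 d) * \<delta>) \<le> real (card Z') \<and> real (card Z') \<le> (4 * K0 d) * (r_i / \<delta>) \<and>
                frostman_le d \<delta> Z' ((4 * K0 d) * (1 + \<bar>ln \<delta>\<bar>) powr 0)))"
      proof (intro allI impI)
        fix i assume "i < N"
        then have "goodZ d \<delta> K (4 * K0 d) (Z i)" using Yall by blast
        then show "\<exists>c\<in>Rd d. \<exists>r_i. Z i \<subseteq> eball d c r_i \<and>
             r_i \<ge> \<delta> * K powr (1 / real d) / (4 * K0 d) \<and>
             (\<exists>Z'. Z' \<subseteq> Z i \<and>
                r_i / ((4 * K0 d) * \<delta>) \<le> real (card Z') \<and> real (card Z') \<le> (4 * K0 d) * (r_i / \<delta>) \<and>
                frostman_le d \<delta> Z' ((4 * K0 d) * (1 + \<bar>ln \<delta>\<bar>) powr 0))" by (rule good_conv)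
      qed
      moreover note Yall[THEN conjunct1] Yall[THEN conjunct2, THEN conjunct1]
      Yall[THEN conjunct2, THEN conjunct2, THEN conjunct1]
      Yall[THEN conjunct2, THEN conjunct2, THEN conjunct2, THEN conjunct1]
      ultimately show ?thesis by (intro exI[where x=Y] exI[where x=Z] exI[where x=N] conjI)
    next
      case False
      obtain h where h: "bij_betw h {0..<card X} X" using ex_bij_betw_nat_finite[OF fin] by blast
      define Z where "Z = (\<lambda>i::nat. {h i})"
      define N where "N = card X"
      have e1: "X = {} \<union> (\<Union>i<N. Z i)"
      proof -
        have "(\<Union>i<N. Z i) = h ` {0..<card X}" unfolding Z_def N_def by auto
        also have "\<dots> = X" using h by (simp add: bij_betw_def)
        finally show ?thesis by simp
      qed
      have e2: "\<forall>i<N. \<forall>j<N. i \<noteq> j \<longrightarrow> Z i \<inter> Z j = {}"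
        using h unfolding Z_def N_def bij_betw_def inj_on_def by auto
      have e3: "frostman_le d \<delta> {} K" unfolding frostman_le_def
      proof (intro ballI allI impI)
        fix x r assume "x \<in> Rd d" "r \<ge> \<delta>"
        then have "0 \<le> K * (r / \<delta>)" using K1 dl by simp
        then show "real (card (eball d x r \<inter> {})) \<le> K * (r / \<delta>)" by simp
      qed
      have e4: "\<forall>i<N. goodZ d \<delta> K (4 * K0 d) (Z i)"
      proof (intro allI impI)
        fix i assume "i < N"
        then have "h i \<in> X" using h unfolding N_def bij_betw_def by auto
        then have "h i \<in> Rd d" using XR by auto
        then show "goodZ d \<delta> K (4 * K0 d) (Z i)" unfolding Z_def
          using single_good[OF d dl _ K1] False by simp
      qed
      have e5: "(\<forall>i<N. \<exists>c\<in>Rd d. \<exists>r_i. Z i \<subseteq> eball d c r_i \<and>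
             r_i \<ge> \<delta> * K powr (1 / real d) / (4 * K0 d) \<and>
             (\<exists>Z'. Z' \<subseteq> Z i \<and>
                r_i / ((4 * K0 d) * \<delta>) \<le> real (card Z') \<and> real (card Z') \<le> (4 * K0 d) * (r_i / \<delta>) \<and>
                frostman_le d \<delta> Z' ((4 * K0 d) * (1 + \<bar>ln \<delta>\<bar>) powr 0)))"
      proof (intro allI impI)
        fix i assume "i < N"
        then have "goodZ d \<delta> K (4 * K0 d) (Z i)" using e4 by blast
        then show "\<exists>c\<in>Rd d. \<exists>r_i. Z i \<subseteq> eball d c r_i \<and>
             r_i \<ge> \<delta> * K powr (1 / real d) / (4 * K0 d) \<and>
             (\<exists>Z'. Z' \<subseteq> Z i \<and>
                r_i / ((4 * K0 d) * \<delta>) \<le> real (card Z') \<and> real (card Z') \<le> (4 * K0 d) * (r_i / \<delta>) \<and>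
                frostman_le d \<delta> Z' ((4 * K0 d) * (1 + \<bar>ln \<delta>\<bar>) powr 0))" by (rule good_conv)
      qed
      show ?thesis
        by (intro exI[where x="{}"] exI[where x=Z] exI[where x=N] conjI e1 e2 e3 e5) simp
    qed
  qed
qed

end
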